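(* Let $\mathbf{A}$ be a finite algebra with $|A|>1$. Then for every integer $n>0$, \[ \lceil \log_{|A|}(n) \rceil\leq d_{\mathbf{A}}(n) \leq |A|^n \qquad\text{and}\qquad \lfloor \log_{|A|}(n) \rfloor\leq h_{\mathbf{A}}(n) \leq |A|^n . \] Hence $d_{\mathbf{A}}(n), h_{\mathbf{A}}(n)\in \Omega(\log(n))\cap 2^{O(n)}$. Moreover: (1) $d_{\mathbf{A}}(n) \in O(\log(n))$ if and only if $h_{\mathbf{A}}(n) \in 2^{\Omega(n)}$; (2) $d_{\mathbf{A}}(n) \in O(n)$ if and only if $h_{\mathbf{A}}(n) \in \Omega(n)$, and $d_{\mathbf{A}}(n) \in \Omega(n)$ if and only if $h_{\mathbf{A}}(n) \in O(n)$; (3) $d_{\mathbf{A}}(n) \in 2^{\Omega(n)}$ if and only if $h_{\mathbf{A}}(n) \in O(\log(n))$.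
   Context: For an algebra $\mathbf{A}$ and $n\in\omega=\{0,1,2,\dots\}$, $d_{\mathbf{A}}(n)$ denotes the least size of a generating set of the direct power $\mathbf{A}^n$ (the value is $\omega$ if $\mathbf{A}^n$ is not finitely generated), and $h_{\mathbf{A}}(g)$ denotes the largest $n$ such that $\mathbf{A}^n$ is generated by $g$ elements. Thus $d_{\mathbf{A}}(n)\le g$ iff $n\le h_{\mathbf{A}}(g)$. Big-O notation: $f\in O(g)$ means $|f(x)|\le M|g(x)|$ for some positive constants $M,N$ and all $x>N$; $f\in\Omega(g)$ means $|f(x)|\ge M|g(x)|$ for all $x>N$; $f\in 2^{O(n)}$ (resp. $2^{\Omega(n)}$) means $f(n)=2^{g(n)}$ with $g\in O(n)$ (resp. $g\in\Omega(n)$). *)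

theory Defs
  imports Complex_Main "HOL-Library.Landau_Symbols"
begin

definition is_algebra :: "'a set \<Rightarrow> 'f set \<Rightarrow> ('f \<Rightarrow> nat) \<Rightarrow> ('f \<Rightarrow> 'a list \<Rightarrow> 'a) \<Rightarrow> bool" where
  "is_algebra A Ops ar F \<longleftrightarrow>
     (\<forall>f\<in>Ops. \<forall>xs. length xs = ar f \<and> set xs \<subseteq> A \<longrightarrow> F f xs \<in> A)"

text \<open>Carrier of the direct power A^n: tuples represented as lists of length n.\<close>
definition pow_carrier :: "'a set \<Rightarrow> nat \<Rightarrow> 'a list set" where
  "pow_carrier A n = {xs. length xs = n \<and> set xs \<subseteq> A}"

definition pow_op :: "('f \<Rightarrow> 'a list \<Rightarrow> 'a) \<Rightarrow> nat \<Rightarrow> 'f \<Rightarrow> 'a list list \<Rightarrow> 'a list" where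
  "pow_op F n f xss = map (\<lambda>i. F f (map (\<lambda>xs. xs ! i) xss)) [0..<n]"

inductive_set pow_sg :: "'f set \<Rightarrow> ('f \<Rightarrow> nat) \<Rightarrow> ('f \<Rightarrow> 'a list \<Rightarrow> 'a) \<Rightarrow> nat \<Rightarrow> 'a list set \<Rightarrow> 'a list set"
  for Ops ar F n X where
  gen: "x \<in> X \<Longrightarrow> x \<in> pow_sg Ops ar F n X"
| op: "f \<in> Ops \<Longrightarrow> length xss = ar f \<Longrightarrow> (\<forall>xs\<in>set xss. xs \<in> pow_sg Ops ar F n X)
        \<Longrightarrow> pow_op F n f xss \<in> pow_sg Ops ar F n X"

definition gen_by :: "'a set \<Rightarrow> 'f set \<Rightarrow> ('f \<Rightarrow> nat) \<Rightarrow> ('f \<Rightarrow> 'a list \<Rightarrow> 'a) \<Rightarrow> nat \<Rightarrow> nat \<Rightarrow> bool" where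
  "gen_by A Ops ar F g n \<longleftrightarrow>
     (\<exists>X. X \<subseteq> pow_carrier A n \<and> finite X \<and> card X \<le> g \<and> pow_sg Ops ar F n X = pow_carrier A n)"

text \<open>d_A(n): least size of a generating set of A^n (finite since A is finite).\<close>
definition d_fun :: "'a set \<Rightarrow> 'f set \<Rightarrow> ('f \<Rightarrow> nat) \<Rightarrow> ('f \<Rightarrow> 'a list \<Rightarrow> 'a) \<Rightarrow> nat \<Rightarrow> nat" where
  "d_fun A Ops ar F n = (LEAST g. gen_by A Ops ar F g n)"

definition h_fun :: "'a set \<Rightarrow> 'f set \<Rightarrow> ('f \<Rightarrow> nat) \<Rightarrow> ('f \<Rightarrow> 'a list \<Rightarrow> 'a) \<Rightarrow> nat \<Rightarrow> nat" where
  "h_fun A Ops ar F g = (GREATEST n. gen_by A Ops ar F g n)"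

text \<open>f \<in> 2^{O(n)} and f \<in> 2^{\<Omega>(n)}: f(n) = 2^{g(n)} (for all large n) with g \<in> O(n), resp. \<Omega>(n).\<close>
definition exp_bigo :: "(nat \<Rightarrow> real) \<Rightarrow> bool" where
  "exp_bigo f \<longleftrightarrow> (\<exists>g. g \<in> O(\<lambda>n. real n) \<and> (\<forall>\<^sub>F n in at_top. f n = 2 powr g n))"

definition exp_bigomega :: "(nat \<Rightarrow> real) \<Rightarrow> bool" where
  "exp_bigomega f \<longleftrightarrow> (\<exists>g. g \<in> \<Omega>(\<lambda>n. real n) \<and> (\<forall>\<^sub>F n in at_top. f n = 2 powr g n))"

end

theory Submission imports Defs "HOL-Library.FuncSet"
begin

lemma pow_sg_carrier:
  assumes alg: "is_algebra A Ops ar F" and X: "X \<subseteq> pow_carrier A n"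
  shows "pow_sg Ops ar F n X \<subseteq> pow_carrier A n"
proof
  fix y assume "y \<in> pow_sg Ops ar F n X"
  then show "y \<in> pow_carrier A n"
  proof induction
    case (gen x) then show ?case using X by auto
  next
    case (op f xss)
    have "F f (map (\<lambda>xs. xs ! i) xss) \<in> A" if "i < n" for i
    proof -
      have "set (map (\<lambda>xs. xs ! i) xss) \<subseteq> A"
        using op(3) that by (auto simp: pow_carrier_def) (metis nth_mem subset_iff)
      then show ?thesis using alg op(1,2) unfolding is_algebra_def by auto
    qed
    then show ?case by (auto simp: pow_carrier_def pow_op_def)
  qed
qed

lemma gen_all:
  assumes alg: "is_algebra A Ops ar F" and fin: "finite A"
  shows "gen_by A Ops ar F (card A ^ n) n"
proof -
  have eq: "pow_carrier A n = {xs. set xs \<subseteq> A \<and> length xs = n}"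
    by (auto simp: pow_carrier_def)
  have "pow_carrier A n \<subseteq> pow_sg Ops ar F n (pow_carrier A n)"
    by (auto intro: pow_sg.gen)
  moreover have "pow_sg Ops ar F n (pow_carrier A n) \<subseteq> pow_carrier A n"
    by (rule pow_sg_carrier[OF alg]) simp
  ultimately show ?thesis unfolding gen_by_def
    by (intro exI[of _ "pow_carrier A n"])
       (auto simp: eq finite_lists_length_eq[OF fin] card_lists_length_eq[OF fin])
qed

lemma gen_bound:
  assumes fin: "finite A" and card: "card A > 1"
    and g: "gen_by A Ops ar F g n"
  shows "n \<le> card A ^ g"
proof (rule ccontr)
  assume nle: "\<not> n \<le> card A ^ g"
  obtain X where X: "X \<subseteq> pow_carrier A n" "finite X" "card X \<le> g"
    "pow_sg Ops ar F n X = pow_carrier A n"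
    using g unfolding gen_by_def by blast
  define \<phi> where "\<phi> i = (\<lambda>x\<in>X. x ! i)" for i
  have nthA: "x ! i \<in> A" if "x \<in> X" "i < n" for x i
  proof -
    have "length x = n" "set x \<subseteq> A" using that X(1) by (auto simp: pow_carrier_def)
    then show ?thesis using nth_mem[of i x] that(2) by blast
  qed
  have sub: "\<phi> ` {..<n} \<subseteq> (\<Pi>\<^sub>E x\<in>X. A)"
  proof
    fix z assume "z \<in> \<phi> ` {..<n}"
    then obtain i where "i < n" "z = \<phi> i" by auto
    then show "z \<in> (\<Pi>\<^sub>E x\<in>X. A)" using nthA by (auto simp: \<phi>_def)
  qed
  have c1: "card (\<Pi>\<^sub>E x\<in>X. A) = card A ^ card X"
    using X(2) by (simp add: card_PiE)
  have c2: "card A ^ card X \<le> card A ^ g"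
    using card X(3) by (intro power_increasing) auto
  have fP: "finite (\<Pi>\<^sub>E x\<in>X. A)" using X(2) fin by (rule finite_PiE)
  have "\<not> inj_on \<phi> {..<n}"
  proof
    assume "inj_on \<phi> {..<n}"
    then have "card {..<n} \<le> card (\<Pi>\<^sub>E x\<in>X. A)" using sub fP by (rule card_inj_on_le)
    then show False using c1 c2 nle by simp
  qed
  then obtain i j where ij: "i < n" "j < n" "i \<noteq> j" "\<phi> i = \<phi> j"
    unfolding inj_on_def by auto
  have eqij: "\<forall>x\<in>X. x ! i = x ! j"
  proof
    fix x assume "x \<in> X"
    then show "x ! i = x ! j" using fun_cong[OF ij(4), of x] by (simp add: \<phi>_def)
  qed
  have all: "y ! i = y ! j" if "y \<in> pow_sg Ops ar F n X" for y
    using that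
  proof induction
    case (gen x) then show ?case using eqij by auto
  next
    case (op f xss)
    have em: "map (\<lambda>xs. xs ! i) xss = map (\<lambda>xs. xs ! j) xss"
      using op(3) by (intro map_cong) auto
    have "pow_op F n f xss ! i = F f (map (\<lambda>xs. xs ! i) xss)" using ij by (simp add: pow_op_def)
    also have "\<dots> = F f (map (\<lambda>xs. xs ! j) xss)" using em by (rule arg_cong)
    also have "\<dots> = pow_op F n f xss ! j" using ij by (simp add: pow_op_def)
    finally show ?case .
  qed
  obtain a b where ab: "a \<in> A" "b \<in> A" "a \<noteq> b"
    using card fin card_le_Suc0_iff_eq[OF fin] by (auto simp: not_le[symmetric])
  define y where "y = (replicate n a)[i := b]"
  have "set y \<subseteq> insert b (set (replicate n a))" unfolding y_def by (rule set_update_subset_insert)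
  also have "\<dots> \<subseteq> A" using ab by auto
  finally have "y \<in> pow_carrier A n" by (simp add: pow_carrier_def y_def)
  then have "y ! i = y ! j" using all X(4) by auto
  moreover have "y ! i = b" "y ! j = a" using ij by (auto simp: y_def)
  ultimately show False using ab by simp
qed

lemma take_pow_op:
  assumes "m \<le> n"
  shows "take m (pow_op F n f xss) = pow_op F m f (map (take m) xss)"
  using assms by (auto simp: pow_op_def take_map comp_def intro!: map_cong)

lemma gen_down:
  assumes g: "gen_by A Ops ar F g n" and mn: "m \<le> n" and alg: "is_algebra A Ops ar F"
    and ne: "A \<noteq> {}"
  shows "gen_by A Ops ar F g m"
proof -
  obtain X where X: "X \<subseteq> pow_carrier A n" "finite X" "card X \<le> g"
    "pow_sg Ops ar F n X = pow_carrier A n"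
    using g unfolding gen_by_def by blast
  let ?Y = "take m ` X"
  have Y: "?Y \<subseteq> pow_carrier A m"
    using X(1) mn by (auto simp: pow_carrier_def dest: set_take_subset[THEN subsetD])
  have sub: "take m y \<in> pow_sg Ops ar F m ?Y" if "y \<in> pow_sg Ops ar F n X" for y
    using that
  proof induction
    case (gen x) then show ?case by (auto intro: pow_sg.gen)
  next
    case (op f xss)
    show ?case unfolding take_pow_op[OF mn]
      by (rule pow_sg.op) (use op in auto)
  qed
  have "pow_carrier A m \<subseteq> pow_sg Ops ar F m ?Y"
  proof
    fix z assume z: "z \<in> pow_carrier A m"
    show "z \<in> pow_sg Ops ar F m ?Y"
    proof -
      obtain a where a: "a \<in> A" using ne by auto
      have "z @ replicate (n - m) a \<in> pow_carrier A n"
        using z a mn by (auto simp: pow_carrier_def)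
      then have "take m (z @ replicate (n - m) a) \<in> pow_sg Ops ar F m ?Y"
        using sub X(4) by blast
      then show ?thesis using z by (simp add: pow_carrier_def)
    qed
  qed
  moreover have "pow_sg Ops ar F m ?Y \<subseteq> pow_carrier A m" by (rule pow_sg_carrier[OF alg Y])
  moreover have "card ?Y \<le> g" using X(2,3) card_image_le order_trans by blast
  ultimately show ?thesis unfolding gen_by_def using Y X(2) by (intro exI[of _ ?Y]) auto
qed


lemma bigo_nat_iff: "(f::nat\<Rightarrow>real) \<in> O(g) \<longleftrightarrow> (\<exists>c>0. \<exists>N. \<forall>n\<ge>N. \<bar>f n\<bar> \<le> c * \<bar>g n\<bar>)"
  by (simp add: bigo_def eventually_at_top_linorder)

lemma bigomega_nat_iff: "(f::nat\<Rightarrow>real) \<in> \<Omega>(g) \<longleftrightarrow> (\<exists>c>0. \<exists>N. \<forall>n\<ge>N. \<bar>f n\<bar> \<ge> c * \<bar>g n\<bar>)"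
  by (simp add: bigomega_def eventually_at_top_linorder)

lemma exp_bigomega_iff:
  fixes D :: "nat \<Rightarrow> nat"
  assumes pos: "\<forall>n\<ge>N0. D n \<ge> 1"
  shows "exp_bigomega (\<lambda>n. real (D n)) \<longleftrightarrow> (\<exists>c>0. \<exists>N. \<forall>n\<ge>N. real (D n) \<ge> 2 powr (c * n))"
proof
  assume "exp_bigomega (\<lambda>n. real (D n))"
  then obtain G where G: "G \<in> \<Omega>(\<lambda>n. real n)" "\<forall>\<^sub>F n in at_top. real (D n) = 2 powr G n"
    unfolding exp_bigomega_def by blast
  obtain c N1 where c: "c > 0" "\<forall>n\<ge>N1. \<bar>G n\<bar> \<ge> c * \<bar>real n\<bar>"
    using G(1) unfolding bigomega_nat_iff by blast
  obtain N2 where N2: "\<forall>n\<ge>N2. real (D n) = 2 powr G n"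
    using G(2) unfolding eventually_at_top_linorder by blast
  have "real (D n) \<ge> 2 powr (c * n)" if "n \<ge> max N0 (max N1 N2)" for n
  proof -
    have "1 \<le> real (D n)" using pos that by auto
    then have "1 \<le> (2::real) powr G n" using N2 that by auto
    then have "G n \<ge> 0"
    proof -
      assume h1: "1 \<le> (2::real) powr G n"
      show "G n \<ge> 0"
      proof (rule ccontr)
        assume "\<not> G n \<ge> 0"
        then have "(2::real) powr G n < 2 powr 0" by (intro powr_less_mono) auto
        then show False using h1 by simp
      qed
    qed
    then have "G n \<ge> c * n" using c(2) that by auto
    then show ?thesis using N2 that by auto
  qed
  then show "\<exists>c>0. \<exists>N. \<forall>n\<ge>N. real (D n) \<ge> 2 powr (c * n)" using c(1) by blast
next
  assume "\<exists>c>0. \<exists>N. \<forall>n\<ge>N. real (D n) \<ge> 2 powr (c * n)"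
  then obtain c N where c: "c > 0" "\<forall>n\<ge>N. real (D n) \<ge> 2 powr (c * n)" by blast
  have "(\<lambda>n. log 2 (real (D n))) \<in> \<Omega>(\<lambda>n. real n)"
    unfolding bigomega_nat_iff
  proof (intro exI[of _ c] conjI c(1) exI[of _ N] allI impI)
    fix n assume n: "n \<ge> N"
    have "(0::real) < 2 powr (c * n)" by simp
    then have Dp: "real (D n) > 0" using c(2) n by (meson less_le_trans)
    have "c * n = log 2 (2 powr (c * n))" by simp
    also have "\<dots> \<le> log 2 (real (D n))"
      using c(2) n Dp by (subst log_le_cancel_iff) auto
    finally show "\<bar>log 2 (real (D n))\<bar> \<ge> c * \<bar>real n\<bar>" using c(1) by auto
  qed
  moreover have "\<forall>\<^sub>F n in at_top. real (D n) = 2 powr (log 2 (real (D n)))"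
    unfolding eventually_at_top_linorder using pos by (intro exI[of _ N0]) auto
  ultimately show "exp_bigomega (\<lambda>n. real (D n))" unfolding exp_bigomega_def by blast
qed

lemma exp_bigo_intro:
  fixes D :: "nat \<Rightarrow> nat"
  assumes pos: "\<forall>n\<ge>N0. D n \<ge> 1" and ub: "\<forall>n\<ge>N0. D n \<le> b ^ n" and b: "b \<ge> 1"
  shows "exp_bigo (\<lambda>n. real (D n))"
proof -
  have "(\<lambda>n. log 2 (real (D n))) \<in> O(\<lambda>n. real n)"
    unfolding bigo_nat_iff
  proof (intro exI[of _ "log 2 b + 1"] conjI exI[of _ N0] allI impI)
    have "log 2 b \<ge> 0" using b by simp
    then show "log 2 b + 1 > 0" by linarith
    fix n assume n: "n \<ge> N0"
    have d1: "real (D n) \<ge> 1" using pos n by auto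
    have "log 2 (real (D n)) \<le> log 2 (real b ^ n)"
      using ub n d1 b by (subst log_le_cancel_iff) (auto simp flip: of_nat_power)
    also have "\<dots> = n * log 2 b" by (simp add: log_nat_power)
    also have "\<dots> \<le> (log 2 b + 1) * n" by (simp add: algebra_simps)
    finally show "\<bar>log 2 (real (D n))\<bar> \<le> (log 2 b + 1) * \<bar>real n\<bar>"
      using d1 by simp
  qed
  moreover have "\<forall>\<^sub>F n in at_top. real (D n) = 2 powr (log 2 (real (D n)))"
    unfolding eventually_at_top_linorder using pos by (intro exI[of _ N0]) auto
  ultimately show ?thesis unfolding exp_bigo_def by blast
qed


locale gdh =
  fixes D H :: "nat \<Rightarrow> nat" and b :: nat
  assumes b2: "b \<ge> 2"
    and gal: "\<And>n g. g \<ge> 1 \<Longrightarrow> D n \<le> g \<longleftrightarrow> n \<le> H g"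
    and up: "\<And>n. n \<le> b ^ D n"
    and dub: "\<And>n. D n \<le> b ^ n"
begin

lemma dHg: "g \<ge> 1 \<Longrightarrow> D (H g) \<le> g" using gal by blast

lemma hub: "g \<ge> 1 \<Longrightarrow> H g \<le> b ^ g"
proof -
  assume g: "g \<ge> 1"
  have "H g \<le> b ^ D (H g)" by (rule up)
  also have "\<dots> \<le> b ^ g" using dHg[OF g] b2 by (intro power_increasing) auto
  finally show ?thesis .
qed

lemma hlb: "g \<ge> 1 \<Longrightarrow> b ^ m \<le> g \<Longrightarrow> m \<le> H g"
  using gal dub order_trans by blast

lemma hlt: "g \<ge> 1 \<Longrightarrow> g < b ^ (H g + 1)"
proof (rule ccontr)
  assume "g \<ge> 1" "\<not> g < b ^ (H g + 1)"
  then have "H g + 1 \<le> H g" using hlb[of g "H g + 1"] by simp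
  then show False by simp
qed

lemma dpos: "n \<ge> 2 \<Longrightarrow> D n \<ge> 1"
  using up[of n] by (cases "D n") auto

lemma hpos: "g \<ge> b \<Longrightarrow> H g \<ge> 1"
  using hlb[of g 1] b2 by auto

lemma lnb: "ln b > 0" using b2 by simp

lemma ln_d: "n \<ge> 1 \<Longrightarrow> ln (real n) \<le> D n * ln b"
proof -
  assume n: "n \<ge> 1"
  have "real n \<le> real (b ^ D n)" using up[of n] by (simp only: of_nat_le_iff)
  then have "real n \<le> real b ^ D n" by simp
  then have "ln (real n) \<le> ln (real b ^ D n)" using n b2 by (subst ln_le_cancel_iff) auto
  then show ?thesis using b2 by (simp add: ln_realpow)
qed

lemma ln_h: "g \<ge> 1 \<Longrightarrow> ln (real g) < (H g + 1) * ln b"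
proof -
  assume g: "g \<ge> 1"
  have "real g < real (b ^ (H g + 1))" using hlt[OF g] by (simp only: of_nat_less_iff)
  then have "real g < real b ^ (H g + 1)" by simp
  then have "ln (real g) < ln (real b ^ (H g + 1))" using g b2 by (subst ln_less_cancel_iff) auto
  moreover have "ln (real b ^ (H g + 1)) = real (H g + 1) * ln b" by (rule ln_realpow)
  ultimately show ?thesis by simp
qed

lemma part1:
  assumes n: "n > 0"
  shows "\<lceil>log (real b) (real n)\<rceil> \<le> int (D n) \<and> D n \<le> b ^ n
       \<and> \<lfloor>log (real b) (real n)\<rfloor> \<le> int (H n) \<and> H n \<le> b ^ n"
proof (intro conjI)
  have b1: "real b > 1" using b2 by simp
  show "\<lceil>log (real b) (real n)\<rceil> \<le> int (D n)"
    unfolding ceiling_le_iff using up[of n] n b1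
    by (subst log_le_iff) (auto simp: powr_realpow simp flip: of_nat_power)
  show "D n \<le> b ^ n" by (rule dub)
  show "\<lfloor>log (real b) (real n)\<rfloor> \<le> int (H n)"
  proof -
    have e: "real b powr (real (H n) + 1) = real b ^ (H n + 1)"
      using powr_realpow[of "real b" "H n + 1"] b1 by (simp add: add.commute)
    have "n < b ^ (H n + 1)" using hlt[of n] n by simp
    then have "real n < real (b ^ (H n + 1))" by (simp only: of_nat_less_iff)
    then have "real n < real b ^ (H n + 1)" by simp
    then show ?thesis
      unfolding floor_le_iff using n b1 by (subst log_less_iff) (auto simp: e)
  qed
  show "H n \<le> b ^ n" using hub n by simp
qed

lemma d_omega_ln: "(\<lambda>n. real (D n)) \<in> \<Omega>(\<lambda>n. ln (real n))"
  unfolding bigomega_nat_iff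
proof (intro exI[of _ "1 / ln b"] conjI exI[of _ 1] allI impI)
  show "1 / ln b > 0" using lnb by simp
  fix n :: nat assume n: "n \<ge> 1"
  have "ln (real n) / ln b \<le> D n" using ln_d[OF n] lnb by (simp add: divide_le_eq)
  then show "\<bar>real (D n)\<bar> \<ge> 1 / ln b * \<bar>ln (real n)\<bar>" using n by simp
qed

lemma h_omega_ln: "(\<lambda>n. real (H n)) \<in> \<Omega>(\<lambda>n. ln (real n))"
  unfolding bigomega_nat_iff
proof (intro exI[of _ "1 / (2 * ln b)"] conjI exI[of _ "b^2"] allI impI)
  show "1 / (2 * ln b) > 0" using lnb by simp
  fix g :: nat assume g: "g \<ge> b^2"
  have "1 \<le> b^2" using b2 by simp
  then have g1: "g \<ge> 1" using g by linarith
  have "2 * ln b \<le> ln (real g)"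
  proof -
    have "real (b ^ 2) \<le> real g" using g by (simp only: of_nat_le_iff)
    then have "real b ^ 2 \<le> real g" by simp
    then have "ln (real b ^ 2) \<le> ln (real g)" using b2 g1 by (subst ln_le_cancel_iff) auto
    then show ?thesis using b2 by (simp add: ln_realpow)
  qed
  moreover have "ln (real g) < (H g + 1) * ln b" by (rule ln_h[OF g1])
  ultimately have "ln (real g) \<le> 2 * ln b * H g" by (simp add: algebra_simps)
  then have "ln (real g) / (2 * ln b) \<le> H g" using lnb by (simp add: divide_le_eq mult.commute)
  then show "\<bar>real (H g)\<bar> \<ge> 1 / (2 * ln b) * \<bar>ln (real g)\<bar>" using g1 by simp
qed

lemma d_exp_bigo: "exp_bigo (\<lambda>n. real (D n))"
  by (rule exp_bigo_intro[of 2 D b]) (use dpos dub b2 in auto)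

lemma h_exp_bigo: "exp_bigo (\<lambda>n. real (H n))"
  by (rule exp_bigo_intro[of b H b]) (use hpos hub b2 in auto)

end
context gdh begin

lemma divK:
  fixes g K :: nat assumes K: "K \<ge> 1" and g: "g \<ge> K * (N + 2)"
  shows "g div K \<ge> N + 2" "g div K * K \<le> g" "g \<le> 2 * K * (g div K)" "g \<ge> 1"
proof -
  have "K * (N + 2) div K \<le> g div K" using g by (rule div_le_mono)
  then show k: "g div K \<ge> N + 2" using K by simp
  show "g div K * K \<le> g" by (rule div_times_less_eq_dividend)
  define q where "q = g div K"
  have e: "g = q * K + g mod K" by (simp add: q_def)
  have "g mod K < K" using K by simp
  moreover have "K \<le> q * K" using k by (simp add: q_def)
  ultimately have "g \<le> 2 * (q * K)" using e by linarith
  then show "g \<le> 2 * K * (g div K)" by (simp add: q_def algebra_simps)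
  show "g \<ge> 1" using g K by (metis le_add2 le_trans mult_le_mono nat_le_linear numeral_le_one_iff semiring_norm(69) mult_1)
qed

lemma p2a_1:
  assumes "(\<lambda>n. real (D n)) \<in> O(\<lambda>n. real n)"
  shows "(\<lambda>n. real (H n)) \<in> \<Omega>(\<lambda>n. real n)"
proof -
  obtain c N where c: "c > 0" "\<forall>n\<ge>N. \<bar>real (D n)\<bar> \<le> c * \<bar>real n\<bar>"
    using assms unfolding bigo_nat_iff by blast
  define K where "K = nat \<lceil>c\<rceil> + 1"
  have K1: "K \<ge> 1" by (simp add: K_def)
  have cK: "c \<le> real K" unfolding K_def using real_nat_ceiling_ge[of c] by simp
  show ?thesis unfolding bigomega_nat_iff
  proof (intro exI[of _ "1 / (2 * real K)"] conjI exI[of _ "K * (N + 2)"] allI impI)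
    show "1 / (2 * real K) > 0" using K1 by simp
    fix g assume g: "g \<ge> K * (N + 2)"
    define k where "k = g div K"
    note kk = divK[OF K1 g, folded k_def]
    have "real (D k) \<le> c * real k" using c(2) kk(1) by auto
    also have "\<dots> \<le> real K * real k" using cK by (simp add: mult_right_mono)
    finally have "D k \<le> k * K" by (simp flip: of_nat_mult add: mult.commute)
    then have "D k \<le> g" using kk(2) by linarith
    then have "k \<le> H g" using gal kk(4) by blast
    then have "real g \<le> 2 * real K * real (H g)" using kk(3)
      by (metis (mono_tags) le_trans mult_le_mono2 of_nat_le_iff of_nat_mult of_nat_numeral)
    then show "\<bar>real (H g)\<bar> \<ge> 1 / (2 * real K) * \<bar>real g\<bar>" using K1
      by (simp add: field_simps)
  qed
qed

lemma p2a_2: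
  assumes "(\<lambda>n. real (H n)) \<in> \<Omega>(\<lambda>n. real n)"
  shows "(\<lambda>n. real (D n)) \<in> O(\<lambda>n. real n)"
proof -
  obtain c M where c: "c > 0" "\<forall>g\<ge>M. \<bar>real (H g)\<bar> \<ge> c * \<bar>real g\<bar>"
    using assms unfolding bigomega_nat_iff by blast
  define K where "K = nat \<lceil>1/c\<rceil> + 1"
  have K1: "K \<ge> 1" by (simp add: K_def)
  have cK: "1/c \<le> real K" unfolding K_def using real_nat_ceiling_ge[of "1/c"] by simp
  then have cK': "1 \<le> c * real K" using c(1) by (simp add: field_simps)
  show ?thesis unfolding bigo_nat_iff
  proof (intro exI[of _ "real K"] conjI exI[of _ "max M 1"] allI impI)
    show "real K > 0" using K1 by simp
    fix n assume n: "n \<ge> max M 1"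
    have gn: "K * n \<ge> n" using K1 by simp
    have "M \<le> K * n" using n gn by (meson max.boundedE order_trans)
    then have "real (H (K * n)) \<ge> c * real (K * n)" using c(2)[rule_format, of "K*n"] by simp
    moreover have "c * real (K * n) \<ge> real n" using cK' c(1)
      by (simp add: mult.assoc[symmetric] mult_le_cancel_right1)
    ultimately have "n \<le> H (K * n)" by linarith
    moreover have "K * n \<ge> 1" using gn n by linarith
    ultimately have "D n \<le> K * n" using gal by blast
    then show "\<bar>real (D n)\<bar> \<le> real K * \<bar>real n\<bar>" by (simp flip: of_nat_mult)
  qed
qed

lemma p2b_1:
  assumes "(\<lambda>n. real (D n)) \<in> \<Omega>(\<lambda>n. real n)"
  shows "(\<lambda>n. real (H n)) \<in> O(\<lambda>n. real n)"
proof -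
  obtain c N where c: "c > 0" "\<forall>n\<ge>N. \<bar>real (D n)\<bar> \<ge> c * \<bar>real n\<bar>"
    using assms unfolding bigomega_nat_iff by blast
  show ?thesis unfolding bigo_nat_iff
  proof (intro exI[of _ "1 + 1/c"] conjI exI[of _ "max N 1"] allI impI)
    show "1 + 1/c > 0" using c(1) by (simp add: add_pos_pos)
    fix g assume g: "g \<ge> max N 1"
    have dh: "D (H g) \<le> g" using dHg g by simp
    have "real (H g) \<le> real g + real g / c"
    proof (cases "H g \<ge> N")
      case True
      then have "c * real (H g) \<le> real g" using c(2) dh
        by (metis abs_of_nat of_nat_le_iff order_trans)
      then have "real (H g) \<le> real g / c" using c(1) by (simp add: field_simps)
      then show ?thesis by (simp add: add_increasing)
    next
      case False
      then have "real (H g) \<le> real g" using g by simp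
      moreover have "real g / c \<ge> 0" using c(1) by simp
      ultimately show ?thesis by linarith
    qed
    then show "\<bar>real (H g)\<bar> \<le> (1 + 1/c) * \<bar>real g\<bar>" by (simp add: algebra_simps)
  qed
qed

lemma p2b_2:
  assumes "(\<lambda>n. real (H n)) \<in> O(\<lambda>n. real n)"
  shows "(\<lambda>n. real (D n)) \<in> \<Omega>(\<lambda>n. real n)"
proof -
  obtain C M where C: "C > 0" "\<forall>g\<ge>M. \<bar>real (H g)\<bar> \<le> C * \<bar>real g\<bar>"
    using assms unfolding bigo_nat_iff by blast
  define M' where "M' = max M 1"
  show ?thesis unfolding bigomega_nat_iff
  proof (intro exI[of _ "1/C"] conjI exI[of _ "b ^ M' + 1"] allI impI)
    show "1/C > 0" using C(1) by simp
    fix n assume n: "n \<ge> b ^ M' + 1"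
    have gM: "D n \<ge> M'"
    proof (rule ccontr)
      assume "\<not> D n \<ge> M'"
      then have "b ^ D n \<le> b ^ M'" using b2 by (intro power_increasing) auto
      then show False using up[of n] n by linarith
    qed
    then have "n \<le> H (D n)" using gal[of "D n" n] by (simp add: M'_def)
    also have "real (H (D n)) \<le> C * real (D n)" using C(2) gM by (auto simp: M'_def)
    finally have "real n \<le> C * real (D n)" by simp
    then show "\<bar>real (D n)\<bar> \<ge> 1/C * \<bar>real n\<bar>" using C(1) by (simp add: field_simps)
  qed
qed

end
context gdh begin

lemma p1_1:
  assumes "(\<lambda>n. real (D n)) \<in> O(\<lambda>n. ln (real n))"
  shows "exp_bigomega (\<lambda>n. real (H n))"
proof -
  obtain c N where c: "c > 0" "\<forall>n\<ge>N. \<bar>real (D n)\<bar> \<le> c * \<bar>ln (real n)\<bar>"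
    using assms unfolding bigo_nat_iff by blast
  define K where "K = nat \<lceil>c * ln 2\<rceil> + 1"
  have K1: "K \<ge> 1" by (simp add: K_def)
  have cK: "c * ln 2 \<le> real K" unfolding K_def using real_nat_ceiling_ge[of "c * ln 2"] by simp
  have "\<exists>c>0. \<exists>N. \<forall>g\<ge>N. real (H g) \<ge> 2 powr (c * g)"
  proof (intro exI[of _ "1 / (2 * real K)"] conjI exI[of _ "K * (N + 2)"] allI impI)
    show "1 / (2 * real K) > 0" using K1 by simp
    fix g assume g: "g \<ge> K * (N + 2)"
    define k where "k = g div K"
    note kk = divK[OF K1 g, folded k_def]
    have kn: "N \<le> 2 ^ k" using kk(1) less_exp[of k] by linarith
    have l2: "ln (real (2 ^ k)) = real k * ln 2" by (simp add: ln_realpow)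
    have "real (D (2 ^ k)) \<le> c * \<bar>ln (real (2 ^ k))\<bar>" using c(2) kn by auto
    also have "\<dots> = (c * ln 2) * real k" using l2 by simp
    also have "\<dots> \<le> real K * real k" using cK by (simp add: mult_right_mono)
    finally have "D (2 ^ k) \<le> k * K" by (simp flip: of_nat_mult add: mult.commute)
    then have "D (2 ^ k) \<le> g" using kk(2) by linarith
    then have hk: "2 ^ k \<le> H g" using gal kk(4) by blast
    have "real g \<le> real (2 * K * k)" using kk(3) by (simp only: of_nat_le_iff)
    then have "real g \<le> 2 * real K * real k" by simp
    then have "1 / (2 * real K) * real g \<le> real k" using K1 by (simp add: field_simps)
    then have "(2::real) powr (1 / (2 * real K) * real g) \<le> 2 powr real k" by simp
    also have "\<dots> = real (2 ^ k)" by (simp add: powr_realpow)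
    also have "\<dots> \<le> real (H g)" using hk by linarith
    finally show "2 powr (1 / (2 * real K) * real g) \<le> real (H g)" .
  qed
  then show ?thesis using exp_bigomega_iff[of b H] hpos by blast
qed

lemma p1_2:
  assumes "exp_bigomega (\<lambda>n. real (H n))"
  shows "(\<lambda>n. real (D n)) \<in> O(\<lambda>n. ln (real n))"
proof -
  obtain c M where c: "c > 0" "\<forall>g\<ge>M. real (H g) \<ge> 2 powr (c * g)"
    using assms exp_bigomega_iff[of b H] hpos by blast
  define K where "K = nat \<lceil>1/c\<rceil> + 1"
  have K1: "K \<ge> 1" by (simp add: K_def)
  have cK: "1/c \<le> real K" unfolding K_def using real_nat_ceiling_ge[of "1/c"] by simp
  then have cK': "1 \<le> c * real K" using c(1) by (simp add: field_simps)
  show ?thesis unfolding bigo_nat_iff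
  proof (intro exI[of _ "2 * real K / ln 2"] conjI exI[of _ "2 ^ (M + 1)"] allI impI)
    show "2 * real K / ln 2 > 0" using K1 by simp
    fix n :: nat assume n: "n \<ge> 2 ^ (M + 1)"
    have n1: "n \<ge> 1" using n by (meson le_trans one_le_numeral one_le_power)
    obtain j where j: "2 ^ j \<le> n" "n < 2 ^ (j + 1)" using ex_power_ivl1[of 2 n] n1 by auto
    have jM: "j \<ge> M + 1"
    proof (rule ccontr)
      assume "\<not> j \<ge> M + 1"
      then have "(2::nat) ^ (j + 1) \<le> 2 ^ (M + 1)" by (intro power_increasing) auto
      then show False using j n by linarith
    qed
    define g where "g = K * (j + 1)"
    have "1 * (j + 1) \<le> K * (j + 1)" using K1 by (rule mult_le_mono1)
    then have gj: "g \<ge> j + 1" by (simp add: g_def)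
    then have "real (H g) \<ge> 2 powr (c * g)" using c(2) jM by auto
    moreover have "c * real g \<ge> real (j + 1)"
      using mult_right_mono[OF cK', of "real (j+1)"] unfolding g_def
      by (simp only: of_nat_mult mult.assoc mult_1)
    then have "(2::real) powr (c * g) \<ge> 2 powr real (j + 1)" by simp
    moreover have "(2::real) powr real (j + 1) = real (2 ^ (j + 1))" by (subst powr_realpow) auto
    ultimately have "n \<le> H g" using j(2) by linarith
    moreover have "g \<ge> 1" using gj by simp
    ultimately have dg: "D n \<le> g" using gal by blast
    have "g \<le> 2 * K * j" unfolding g_def using jM by simp
    then have "D n \<le> 2 * K * j" using dg by linarith
    then have "real (D n) \<le> real (2 * K * j)" by (simp only: of_nat_le_iff)
    then have "real (D n) \<le> 2 * real K * real j" by simp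
    moreover have "real j * ln 2 \<le> ln (real n)"
    proof -
      have "real (2 ^ j) \<le> real n" using j(1) by linarith
      then have "ln (real (2 ^ j)) \<le> ln (real n)" using n1 by (subst ln_le_cancel_iff) auto
      then show ?thesis by (simp add: ln_realpow)
    qed
    moreover have "2 * real K * real j = 2 * real K / ln 2 * (real j * ln 2)" by simp
    moreover have "2 * real K / ln 2 * (real j * ln 2) \<le> 2 * real K / ln 2 * ln (real n)"
      by (rule mult_left_mono[OF \<open>real j * ln 2 \<le> ln (real n)\<close>]) simp
    ultimately have "real (D n) \<le> 2 * real K / ln 2 * ln (real n)" by linarith
    then show "\<bar>real (D n)\<bar> \<le> 2 * real K / ln 2 * \<bar>ln (real n)\<bar>" using n1 by simp
  qed
qed

lemma p3_1:
  assumes "exp_bigomega (\<lambda>n. real (D n))"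
  shows "(\<lambda>n. real (H n)) \<in> O(\<lambda>n. ln (real n))"
proof -
  obtain c N where c: "c > 0" "\<forall>n\<ge>N. real (D n) \<ge> 2 powr (c * n)"
    using assms exp_bigomega_iff[of 2 D] dpos by blast
  show ?thesis unfolding bigo_nat_iff
  proof (intro exI[of _ "(1 + 1/c) / ln 2"] conjI exI[of _ "max (2 ^ N) 2"] allI impI)
    show "(1 + 1/c) / ln 2 > 0" using c(1) by (simp add: add_pos_pos)
    fix g :: nat assume g: "g \<ge> max (2 ^ N) 2"
    have g1: "g \<ge> 1" using g by simp
    have dh: "D (H g) \<le> g" using dHg g1 by simp
    have lN: "real N \<le> log 2 g" using g by (intro le_log_of_power) auto
    have "real (H g) \<le> log 2 g + log 2 g / c"
    proof (cases "H g \<ge> N")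
      case True
      then have "2 powr (c * H g) \<le> real g" using c(2) dh by (meson of_nat_le_iff order_trans)
      then have "c * H g \<le> log 2 g" using g1 by (subst le_log_iff) auto
      then have "real (H g) \<le> log 2 g / c" using c(1) by (simp add: field_simps)
      moreover have "log 2 g \<ge> 0" using g1 by simp
      ultimately show ?thesis by linarith
    next
      case False
      then have "real (H g) \<le> log 2 g" using lN by simp
      moreover have "log 2 g / c \<ge> 0" using c(1) g1 by simp
      ultimately show ?thesis by linarith
    qed
    also have "\<dots> = (1 + 1/c) / ln 2 * ln g" by (simp add: log_def field_simps)
    finally show "\<bar>real (H g)\<bar> \<le> (1 + 1/c) / ln 2 * \<bar>ln (real g)\<bar>" using g1 by simp
  qed
qed

lemma p3_2:
  assumes "(\<lambda>n. real (H n)) \<in> O(\<lambda>n. ln (real n))"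
  shows "exp_bigomega (\<lambda>n. real (D n))"
proof -
  obtain C M where C: "C > 0" "\<forall>g\<ge>M. \<bar>real (H g)\<bar> \<le> C * \<bar>ln (real g)\<bar>"
    using assms unfolding bigo_nat_iff by blast
  define M' where "M' = max M 1"
  have "\<exists>c>0. \<exists>N. \<forall>n\<ge>N. real (D n) \<ge> 2 powr (c * n)"
  proof (intro exI[of _ "1 / (C * ln 2)"] conjI exI[of _ "b ^ M' + 1"] allI impI)
    show "1 / (C * ln 2) > 0" using C(1) by simp
    fix n assume n: "n \<ge> b ^ M' + 1"
    have gM: "D n \<ge> M'"
    proof (rule ccontr)
      assume "\<not> D n \<ge> M'"
      then have "b ^ D n \<le> b ^ M'" using b2 by (intro power_increasing) auto
      then show False using up[of n] n by linarith
    qed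
    then have g1: "D n \<ge> 1" by (simp add: M'_def)
    have "n \<le> H (D n)" using gal[of "D n" n] gM by (simp add: M'_def)
    also have "real (H (D n)) \<le> C * ln (real (D n))" using C(2) gM g1 by (auto simp: M'_def)
    finally have "real n / C \<le> ln (real (D n))" using C(1) by (simp add: field_simps)
    then have "exp (real n / C) \<le> exp (ln (real (D n)))" by simp
    then have "exp (real n / C) \<le> real (D n)" using g1 by simp
    moreover have "(2::real) powr (1 / (C * ln 2) * real n) = exp (real n / C)"
      using C(1) by (simp add: powr_def field_simps)
    ultimately show "2 powr (1 / (C * ln 2) * real n) \<le> real (D n)" by simp
  qed
  then show ?thesis using exp_bigomega_iff[of 2 D] dpos by blast
qed

end

lemma d_le_iff:
  assumes alg: "is_algebra A Ops ar F" and fin: "finite A"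
  shows "d_fun A Ops ar F n \<le> g \<longleftrightarrow> gen_by A Ops ar F g n"
proof
  have ex: "gen_by A Ops ar F (card A ^ n) n" by (rule gen_all[OF alg fin])
  assume "d_fun A Ops ar F n \<le> g"
  moreover have "gen_by A Ops ar F (d_fun A Ops ar F n) n"
    unfolding d_fun_def by (rule LeastI[of "\<lambda>g. gen_by A Ops ar F g n", OF ex])
  ultimately show "gen_by A Ops ar F g n" unfolding gen_by_def using le_trans by blast
next
  assume "gen_by A Ops ar F g n"
  then show "d_fun A Ops ar F n \<le> g" unfolding d_fun_def by (rule Least_le[of "\<lambda>g. gen_by A Ops ar F g n"])
qed

lemma h_le_iff:
  assumes alg: "is_algebra A Ops ar F" and fin: "finite A" and card: "card A > 1"
    and g: "g \<ge> 1"
  shows "n \<le> h_fun A Ops ar F g \<longleftrightarrow> gen_by A Ops ar F g n"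
proof -
  have ne: "A \<noteq> {}" using card by auto
  have "gen_by A Ops ar F (card A ^ 0) 0" by (rule gen_all[OF alg fin])
  then have g0: "gen_by A Ops ar F g 0" using g unfolding gen_by_def by auto
  have bd: "\<And>y. gen_by A Ops ar F g y \<Longrightarrow> y \<le> card A ^ g"
    using gen_bound[OF fin card] by blast
  have gh: "gen_by A Ops ar F g (h_fun A Ops ar F g)"
    unfolding h_fun_def by (rule GreatestI_nat[of "\<lambda>y. gen_by A Ops ar F g y", OF g0 bd])
  show ?thesis
  proof
    assume "n \<le> h_fun A Ops ar F g"
    then show "gen_by A Ops ar F g n" using gen_down[OF gh _ alg ne] by blast
  next
    assume "gen_by A Ops ar F g n"
    then show "n \<le> h_fun A Ops ar F g" unfolding h_fun_def by (rule Greatest_le_nat[of "\<lambda>y. gen_by A Ops ar F g y", OF _ bd])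
  qed
qed

theorem theorem2p2:
  fixes A :: "'a set" and Ops :: "'f set" and ar :: "'f \<Rightarrow> nat"
    and F :: "'f \<Rightarrow> 'a list \<Rightarrow> 'a"
  assumes alg: "is_algebra A Ops ar F"
    and fin: "finite A" and card: "card A > 1"
  defines "d \<equiv> (\<lambda>n. real (d_fun A Ops ar F n))"
    and "h \<equiv> (\<lambda>n. real (h_fun A Ops ar F n))"
  shows "(\<forall>n::nat. n > 0 \<longrightarrow>
            \<lceil>log (real (card A)) (real n)\<rceil> \<le> int (d_fun A Ops ar F n)
          \<and> d_fun A Ops ar F n \<le> card A ^ n
          \<and> \<lfloor>log (real (card A)) (real n)\<rfloor> \<le> int (h_fun A Ops ar F n)
          \<and> h_fun A Ops ar F n \<le> card A ^ n)
    \<and> d \<in> \<Omega>(\<lambda>n. ln (real n)) \<and> exp_bigo d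
    \<and> h \<in> \<Omega>(\<lambda>n. ln (real n)) \<and> exp_bigo h
    \<and> (d \<in> O(\<lambda>n. ln (real n)) \<longleftrightarrow> exp_bigomega h)
    \<and> (d \<in> O(\<lambda>n. real n) \<longleftrightarrow> h \<in> \<Omega>(\<lambda>n. real n))
    \<and> (d \<in> \<Omega>(\<lambda>n. real n) \<longleftrightarrow> h \<in> O(\<lambda>n. real n))
    \<and> (exp_bigomega d \<longleftrightarrow> h \<in> O(\<lambda>n. ln (real n)))"
proof -
  interpret gdh "d_fun A Ops ar F" "h_fun A Ops ar F" "card A"
  proof
    show "card A \<ge> 2" using card by simp
    fix n g :: nat
    assume "g \<ge> 1"
    then show "d_fun A Ops ar F n \<le> g \<longleftrightarrow> n \<le> h_fun A Ops ar F g"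
      using d_le_iff[OF alg fin] h_le_iff[OF alg fin card] by blast
  next
    fix n
    have "gen_by A Ops ar F (d_fun A Ops ar F n) n" using d_le_iff[OF alg fin] by blast
    then show "n \<le> card A ^ d_fun A Ops ar F n" by (rule gen_bound[OF fin card])
    show "d_fun A Ops ar F n \<le> card A ^ n"
      using d_le_iff[OF alg fin] gen_all[OF alg fin] by blast
  qed
  have P1: "\<forall>n::nat. n > 0 \<longrightarrow>
            \<lceil>log (real (card A)) (real n)\<rceil> \<le> int (d_fun A Ops ar F n)
          \<and> d_fun A Ops ar F n \<le> card A ^ n
          \<and> \<lfloor>log (real (card A)) (real n)\<rfloor> \<le> int (h_fun A Ops ar F n)
          \<and> h_fun A Ops ar F n \<le> card A ^ n"
    using part1 by blast
  have E1: "d \<in> O(\<lambda>n. ln (real n)) \<longleftrightarrow> exp_bigomega h"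
    unfolding d_def h_def using p1_1 p1_2 by (rule iffI)
  have E2: "d \<in> O(\<lambda>n. real n) \<longleftrightarrow> h \<in> \<Omega>(\<lambda>n. real n)"
    unfolding d_def h_def using p2a_1 p2a_2 by (rule iffI)
  have E3: "d \<in> \<Omega>(\<lambda>n. real n) \<longleftrightarrow> h \<in> O(\<lambda>n. real n)"
    unfolding d_def h_def using p2b_1 p2b_2 by (rule iffI)
  have E4: "exp_bigomega d \<longleftrightarrow> h \<in> O(\<lambda>n. ln (real n))"
    unfolding d_def h_def using p3_1 p3_2 by (rule iffI)
  have E5: "d \<in> \<Omega>(\<lambda>n. ln (real n))" "exp_bigo d" "h \<in> \<Omega>(\<lambda>n. ln (real n))" "exp_bigo h"
    unfolding d_def h_def by (rule d_omega_ln d_exp_bigo h_omega_ln h_exp_bigo)+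
  show ?thesis
    using P1 E1 E2 E3 E4 E5 by (intro conjI) blast+
qed

end
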